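(* Let $P$ be a separable normed space which is topologically projective in $\mathbf{Nor}$. Then $P$ has at most countable (Hamel) linear dimension.
   Context: An operator $\tau:F\to E$ is coisometric if $\|\tau\|\le1$ and for each $x\in E$, $\varepsilon>0$ there is $y\in F$ with $\tau(y)=x$, $\|y\|<\|x\|+\varepsilon$. A normed space $P$ is topologically projective in $\mathbf{Nor}$ if for every coisometric operator $\tau:F\to E$ between normed spaces and every bounded operator $\varphi:P\to E$ there is a bounded operator $\psi:P\to F$ with $\tau\psi=\varphi$. *)

theory Defs
  imports "HOL-Analysis.Analysis" "HOL-Analysis.Finite_Function_Topology"
begin

text \<open>A normed space is modelled as a linear subspace S of an ambient real vector
  space together with a function N which is a norm on S.\<close>

definition is_norm_on :: "'v::real_vector set \<Rightarrow> ('v \<Rightarrow> real) \<Rightarrow> bool" where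
  "is_norm_on S N \<longleftrightarrow> subspace S \<and>
     (\<forall>x\<in>S. 0 \<le> N x) \<and> (\<forall>x\<in>S. N x = 0 \<longleftrightarrow> x = 0) \<and>
     (\<forall>x\<in>S. \<forall>y\<in>S. N (x + y) \<le> N x + N y) \<and>
     (\<forall>x\<in>S. \<forall>c. N (c *\<^sub>R x) = \<bar>c\<bar> * N x)"

definition bounded_op ::
  "'a::real_vector set \<Rightarrow> ('a \<Rightarrow> real) \<Rightarrow> 'b::real_vector set \<Rightarrow> ('b \<Rightarrow> real) \<Rightarrow> ('a \<Rightarrow> 'b) \<Rightarrow> bool" where
  "bounded_op S1 N1 S2 N2 f \<longleftrightarrow> f ` S1 \<subseteq> S2 \<and>
     (\<forall>x\<in>S1. \<forall>y\<in>S1. f (x + y) = f x + f y) \<and>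
     (\<forall>x\<in>S1. \<forall>c. f (c *\<^sub>R x) = c *\<^sub>R f x) \<and>
     (\<exists>K. \<forall>x\<in>S1. N2 (f x) \<le> K * N1 x)"

definition coisometric ::
  "'a::real_vector set \<Rightarrow> ('a \<Rightarrow> real) \<Rightarrow> 'b::real_vector set \<Rightarrow> ('b \<Rightarrow> real) \<Rightarrow> ('a \<Rightarrow> 'b) \<Rightarrow> bool" where
  "coisometric SF NF SE NE \<tau> \<longleftrightarrow> bounded_op SF NF SE NE \<tau> \<and>
     (\<forall>y\<in>SF. NE (\<tau> y) \<le> NF y) \<and>
     (\<forall>x\<in>SE. \<forall>\<epsilon>>0. \<exists>y\<in>SF. \<tau> y = x \<and> NF y < NE x + \<epsilon>)"

text \<open>Normed spaces E, F range over all normed spaces realised as subspaces of the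
  ambient real vector space of functions (('p set, real) poly_mapping).\<close>
definition topo_projective_Nor :: "'p::real_normed_vector itself \<Rightarrow> bool" where
  "topo_projective_Nor (_::'p itself) \<longleftrightarrow>
     (\<forall>(SF :: (('p set, real) poly_mapping) set) NF (SE :: (('p set, real) poly_mapping) set) NE \<tau> (\<phi> :: 'p \<Rightarrow> (('p set, real) poly_mapping)).
        is_norm_on SF NF \<longrightarrow> is_norm_on SE NE \<longrightarrow> coisometric SF NF SE NE \<tau> \<longrightarrow>
        bounded_op UNIV norm SE NE \<phi> \<longrightarrow>
        (\<exists>\<psi>. bounded_op UNIV norm SF NF \<psi> \<and> (\<forall>x. \<tau> (\<psi> x) = \<phi> x)))"

end

theory Submission
  imports Defs
begin

lemma lookup_scaleR_pm: "Poly_Mapping.lookup (c *\<^sub>R (a::'a \<Rightarrow>\<^sub>0 real)) k = c * Poly_Mapping.lookup a k"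
proof -
  have "finite {i. c *\<^sub>R Poly_Mapping.lookup a i \<noteq> 0}"
    by (rule finite_subset[OF _ finite_lookup[of a]]) auto
  then show ?thesis unfolding scaleR_poly_mapping_def by simp
qed

lemma keys_scaleR_sub: "Poly_Mapping.keys (c *\<^sub>R (a::'a \<Rightarrow>\<^sub>0 real)) \<subseteq> Poly_Mapping.keys a"
  by (auto simp: in_keys_iff lookup_scaleR_pm)

definition NFd :: "('p::real_normed_vector set \<Rightarrow>\<^sub>0 real) \<Rightarrow> real" where
  "NFd a = (\<Sum>z\<in>Poly_Mapping.keys a. \<bar>Poly_Mapping.lookup a z\<bar> * norm (the_elem z))"

definition Td :: "('p::real_normed_vector set \<Rightarrow>\<^sub>0 real) \<Rightarrow> 'p" where
  "Td a = (\<Sum>z\<in>Poly_Mapping.keys a. Poly_Mapping.lookup a z *\<^sub>R the_elem z)"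

definition SFd :: "('p::real_normed_vector set \<Rightarrow>\<^sub>0 real) set" where
  "SFd = {a. Poly_Mapping.keys a \<subseteq> {z. \<exists>x. x \<noteq> 0 \<and> z = {x}}}"

lemma NFd_ext: "finite A \<Longrightarrow> Poly_Mapping.keys a \<subseteq> A \<Longrightarrow> NFd a = (\<Sum>z\<in>A. \<bar>Poly_Mapping.lookup a z\<bar> * norm (the_elem z))"
  unfolding NFd_def by (rule sum.mono_neutral_left) (auto simp: in_keys_iff)

lemma Td_ext: "finite A \<Longrightarrow> Poly_Mapping.keys a \<subseteq> A \<Longrightarrow> Td a = (\<Sum>z\<in>A. Poly_Mapping.lookup a z *\<^sub>R the_elem z)"
  unfolding Td_def by (rule sum.mono_neutral_left) (auto simp: in_keys_iff)

lemma Td_add: "Td (a + b) = Td a + Td b"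
proof -
  let ?A = "Poly_Mapping.keys a \<union> Poly_Mapping.keys b"
  have f: "finite ?A" by simp
  have "Poly_Mapping.keys (a+b) \<subseteq> ?A" by (rule keys_add)
  then show ?thesis using Td_ext[OF f] f
    by (simp add: lookup_add scaleR_add_left sum.distrib)
qed

lemma Td_scale: "Td (c *\<^sub>R a) = c *\<^sub>R Td a"
  using Td_ext[of "Poly_Mapping.keys a" "c *\<^sub>R a", OF _ keys_scaleR_sub]
  by (simp add: lookup_scaleR_pm Td_def scaleR_sum_right)

lemma NFd_add: "NFd (a + b) \<le> NFd a + NFd b"
proof -
  let ?A = "Poly_Mapping.keys a \<union> Poly_Mapping.keys b"
  have f: "finite ?A" by simp
  have k: "Poly_Mapping.keys (a+b) \<subseteq> ?A" by (rule keys_add)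
  have "NFd (a+b) = (\<Sum>z\<in>?A. \<bar>Poly_Mapping.lookup a z + Poly_Mapping.lookup b z\<bar> * norm (the_elem z))"
    using NFd_ext[OF f k] by (simp add: lookup_add)
  also have "\<dots> \<le> (\<Sum>z\<in>?A. \<bar>Poly_Mapping.lookup a z\<bar> * norm (the_elem z) + \<bar>Poly_Mapping.lookup b z\<bar> * norm (the_elem z))"
    by (rule sum_mono) (metis abs_triangle_ineq distrib_right mult_right_mono norm_ge_zero)
  also have "\<dots> = NFd a + NFd b"
    using NFd_ext[OF f, of a] NFd_ext[OF f, of b] by (simp add: sum.distrib)
  finally show ?thesis .
qed

lemma NFd_scale: "NFd (c *\<^sub>R a) = \<bar>c\<bar> * NFd a"
  using NFd_ext[of "Poly_Mapping.keys a" "c *\<^sub>R a", OF _ keys_scaleR_sub]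
  by (simp add: lookup_scaleR_pm NFd_def sum_distrib_left abs_mult mult.assoc)

lemma NFd_nonneg: "0 \<le> NFd a"
  unfolding NFd_def by (auto intro: sum_nonneg)

lemma norm_Td: "norm (Td a) \<le> NFd a"
  unfolding Td_def NFd_def
  by (rule order_trans[OF norm_sum]) simp

lemma coord_bound: "\<bar>Poly_Mapping.lookup a z\<bar> * norm (the_elem z) \<le> NFd a"
proof (cases "z \<in> Poly_Mapping.keys a")
  case True then show ?thesis unfolding NFd_def
    by (intro member_le_sum) auto
next
  case False then show ?thesis using NFd_nonneg by (simp add: in_keys_iff)
qed

lemma NFd_zero: assumes "a \<in> SFd" "NFd a = 0" shows "a = 0"
proof -
  have "Poly_Mapping.keys a = {}"
  proof (rule ccontr)
    assume "Poly_Mapping.keys a \<noteq> {}"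
    then obtain z where z: "z \<in> Poly_Mapping.keys a" by blast
    then obtain x where x: "x \<noteq> 0" "z = {x}" using assms(1) unfolding SFd_def by auto
    have "0 < \<bar>Poly_Mapping.lookup a z\<bar> * norm (the_elem z)" using z x by (simp add: in_keys_iff)
    with coord_bound[of a z] assms(2) show False by simp
  qed
  then show ?thesis by simp
qed

lemma subspace_SFd: "subspace (SFd :: ('p::real_normed_vector set \<Rightarrow>\<^sub>0 real) set)"
proof -
  have "Poly_Mapping.keys (x + y) \<subseteq> Poly_Mapping.keys x \<union> Poly_Mapping.keys y" for x y :: "'p set \<Rightarrow>\<^sub>0 real"
    by (rule keys_add)
  then show ?thesis
    unfolding subspace_def SFd_def
    using keys_scaleR_sub by fastforce
qed

lemma single_span: "Poly_Mapping.keys (a::'b \<Rightarrow>\<^sub>0 real) \<subseteq> A \<Longrightarrow> a \<in> span ((\<lambda>z. Poly_Mapping.single z 1) ` A)"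
proof -
  assume A: "Poly_Mapping.keys a \<subseteq> A"
  have "a = (\<Sum>z\<in>Poly_Mapping.keys a. Poly_Mapping.lookup a z *\<^sub>R Poly_Mapping.single z 1)"
    by (rule poly_mapping_eqI)
       (simp add: lookup_sum lookup_scaleR_pm lookup_single when_def in_keys_iff if_distrib[of "(*) _"] sum.delta' cong: if_cong)
  also have "\<dots> \<in> span ((\<lambda>z. Poly_Mapping.single z 1) ` A)"
    using A by (intro span_sum span_scale span_base) auto
  finally show ?thesis .
qed

theorem proposition2p4:
  assumes "separable_space (euclidean :: 'p::real_normed_vector topology)"
    and "topo_projective_Nor TYPE('p)"
  shows "\<exists>B :: 'p set. independent B \<and> span B = UNIV \<and> countable B"
proof -
  obtain B :: "'p set" where B: "independent B" "UNIV \<subseteq> span B"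
    using basis_exists[of "UNIV :: 'p set"] by blast
  have spB: "x \<in> span B" for x using B(2) by auto
  define R where "R x z = (if (\<exists>b. z = {b}) then representation B x (the_elem z) else 0)" for x z
  define j :: "'p \<Rightarrow> ('p set \<Rightarrow>\<^sub>0 real)" where "j x = Abs_poly_mapping (R x)" for x
  have finR: "finite {z. R x z \<noteq> 0}" for x
  proof (rule finite_subset)
    show "{z. R x z \<noteq> 0} \<subseteq> (\<lambda>b. {b}) ` {b. representation B x b \<noteq> 0}"
      unfolding R_def by (auto split: if_splits)
  qed (simp add: finite_representation)
  have lj: "Poly_Mapping.lookup (j x) = R x" for x
    unfolding j_def using finR by simp
  have jadd: "j (x + y) = j x + j y" for x y
    by (rule poly_mapping_eqI) (simp add: lj lookup_add R_def representation_add[OF B(1) spB spB])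
  have jscale: "j (c *\<^sub>R x) = c *\<^sub>R j x" for c x
    by (rule poly_mapping_eqI) (simp add: lj lookup_scaleR_pm R_def representation_scale[OF B(1) spB])
  have lin_j: "linear j" by (rule linearI) (simp_all add: jadd jscale)
  have inj_j: "inj j"
  proof (rule injI)
    fix x y assume "j x = j y"
    then have "R x = R y" using lj by metis
    then have "representation B x b = representation B y b" for b
      unfolding R_def by (metis (mono_tags) the_elem_eq)
    then have "representation B x = representation B y" by auto
    have "x = (\<Sum>b | representation B x b \<noteq> 0. representation B x b *\<^sub>R b)"
      by (rule sym, rule sum_nonzero_representation_eq[OF B(1) spB])
    also have "\<dots> = (\<Sum>b | representation B y b \<noteq> 0. representation B y b *\<^sub>R b)"
      unfolding \<open>representation B x = representation B y\<close> ..
    also have "\<dots> = y"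
      by (rule sum_nonzero_representation_eq[OF B(1) spB])
    finally show "x = y" .
  qed
  have ijj: "inv j (j x) = x" for x using inj_j by simp
  have j0: "j 0 = 0" using linear_0[OF lin_j] .
  have ij0: "inv j 0 = 0" using ijj[of 0] j0 by simp
  define NE where "NE e = norm (inv j e)" for e
  define \<tau> where "\<tau> a = j (Td a)" for a
  have nE: "is_norm_on (range j) NE"
    unfolding is_norm_on_def NE_def
  proof (intro conjI ballI allI)
    show "subspace (range j)" using linear_subspace_image[OF lin_j subspace_UNIV] .
  next
    fix x assume "x \<in> range j" then obtain p where "x = j p" by blast
    then show "(norm (inv j x) = 0) = (x = 0)"
      using ijj linear_0[OF lin_j] by (metis norm_eq_zero)
  next
    fix x y assume "x \<in> range j" "y \<in> range j"
    then obtain p q where "x = j p" "y = j q" by blast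
    then show "norm (inv j (x + y)) \<le> norm (inv j x) + norm (inv j y)"
      by (simp add: ijj flip: jadd) (rule norm_triangle_ineq)
  next
    fix x c assume "x \<in> range j"
    then obtain p where "x = j p" by blast
    then show "norm (inv j (c *\<^sub>R x)) = \<bar>c\<bar> * norm (inv j x)"
      by (simp add: ijj flip: jscale)
  qed simp
  have nF: "is_norm_on SFd NFd"
    unfolding is_norm_on_def
    using subspace_SFd NFd_nonneg NFd_zero NFd_add NFd_scale
    by (auto simp: NFd_def)
  have coi: "coisometric SFd NFd (range j) NE \<tau>"
    unfolding coisometric_def bounded_op_def
  proof (intro conjI ballI allI impI)
    show "\<tau> ` SFd \<subseteq> range j" unfolding \<tau>_def by auto
    show "\<tau> (x + y) = \<tau> x + \<tau> y" for x y unfolding \<tau>_def by (simp add: Td_add jadd)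
    show "\<tau> (c *\<^sub>R x) = c *\<^sub>R \<tau> x" for x c unfolding \<tau>_def by (simp add: Td_scale jscale)
    show "NE (\<tau> y) \<le> NFd y" for y unfolding \<tau>_def NE_def by (simp add: ijj norm_Td)
    then show "\<exists>K. \<forall>x\<in>SFd. NE (\<tau> x) \<le> K * NFd x" by (intro exI[of _ 1]) simp
  next
    fix x and \<epsilon> :: real assume "x \<in> range j" "\<epsilon> > 0"
    then obtain p where p: "x = j p" by blast
    show "\<exists>y\<in>SFd. \<tau> y = x \<and> NFd y < NE x + \<epsilon>"
    proof (cases "p = 0")
      case True
      then show ?thesis using \<open>\<epsilon> > 0\<close> p
        by (intro bexI[of _ 0]) (auto simp: \<tau>_def Td_def NFd_def NE_def ijj SFd_def j0 ij0)
    next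
      case False
      let ?y = "Poly_Mapping.single {p} (1::real)"
      have "?y \<in> SFd" using False by (auto simp: SFd_def)
      moreover have "Td ?y = p" by (simp add: Td_def)
      moreover have "NFd ?y = norm p" by (simp add: NFd_def)
      ultimately show ?thesis using \<open>\<epsilon> > 0\<close> p
        by (intro bexI[of _ ?y]) (auto simp: \<tau>_def NE_def ijj)
    qed
  qed
  have bphi: "bounded_op UNIV norm (range j) NE j"
    unfolding bounded_op_def NE_def
    by (auto simp: jadd jscale ijj intro: exI[of _ 1])
  obtain \<psi> where psi: "bounded_op UNIV norm SFd NFd \<psi>" "\<And>x. \<tau> (\<psi> x) = j x"
    using assms(2) nF nE coi bphi unfolding topo_projective_Nor_def by blast
  have Tpsi: "Td (\<psi> x) = x" for x
    using psi(2)[of x] inj_j unfolding \<tau>_def by (simp add: inj_eq)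
  have psiS: "\<psi> x \<in> SFd" for x using psi(1) unfolding bounded_op_def by auto
  have lin_psi: "linear \<psi>" using psi(1) unfolding bounded_op_def by (intro linearI) auto
  obtain Kb where Kb: "\<And>x. NFd (\<psi> x) \<le> Kb * norm x" using psi(1) unfolding bounded_op_def by auto
  have inj_psi: "inj \<psi>" by (metis Tpsi injI)
  have lookup_diff: "Poly_Mapping.lookup (\<psi> x) z - Poly_Mapping.lookup (\<psi> y) z = Poly_Mapping.lookup (\<psi> (x - y)) z" for x y z
    using linear_diff[OF lin_psi, of x y] by (simp add: lookup_minus)
  obtain D where D: "countable D" "closure D = (UNIV :: 'p set)"
    using assms(1) unfolding separable_space_def by auto
  define C where "C = (\<Union>d\<in>D. Poly_Mapping.keys (\<psi> d))"
  have cC: "countable C" unfolding C_def using D(1) by (intro countable_UN) (auto intro: countable_finite)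
  have keysC: "Poly_Mapping.keys (\<psi> x) \<subseteq> C" for x
  proof
    fix z assume z: "z \<in> Poly_Mapping.keys (\<psi> x)"
    show "z \<in> C"
    proof (rule ccontr)
      assume zC: "z \<notin> C"
      obtain q where q: "q \<noteq> 0" "z = {q}" using psiS[of x] z unfolding SFd_def by auto
      define n where "n = norm (the_elem z)"
      have n: "n > 0" using q by (simp add: n_def)
      define v where "v = \<bar>Poly_Mapping.lookup (\<psi> x) z\<bar>"
      have v: "v > 0" using z by (simp add: v_def in_keys_iff)
      define e where "e = v * n / (\<bar>Kb\<bar> + 1)"
      have e: "e > 0" using v n by (simp add: e_def)
      obtain d where d: "d \<in> D" "dist d x < e"
        using closure_approachable[of x D] D(2) e by auto
      have "Poly_Mapping.lookup (\<psi> d) z = 0" using zC d(1) unfolding C_def by (auto simp: in_keys_iff)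
      then have "v = \<bar>Poly_Mapping.lookup (\<psi> (x - d)) z\<bar>"
      proof -
        have "Poly_Mapping.lookup (\<psi> (x - d)) z = Poly_Mapping.lookup (\<psi> x) z - Poly_Mapping.lookup (\<psi> d) z"
          by (rule lookup_diff[symmetric])
        then show ?thesis using \<open>Poly_Mapping.lookup (\<psi> d) z = 0\<close> by (simp add: v_def)
      qed
      then have "v * n \<le> NFd (\<psi> (x - d))" using coord_bound n_def by metis
      also have "\<dots> \<le> Kb * norm (x - d)" by (rule Kb)
      also have "\<dots> \<le> \<bar>Kb\<bar> * e"
      proof -
        have "norm (x - d) \<le> e" using d(2) by (simp add: dist_norm norm_minus_commute)
        then have "\<bar>Kb\<bar> * norm (x - d) \<le> \<bar>Kb\<bar> * e" by (simp add: mult_left_mono)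
        moreover have "Kb * norm (x - d) \<le> \<bar>Kb\<bar> * norm (x - d)" by (simp add: mult_right_mono)
        ultimately show ?thesis by linarith
      qed
      also have "\<dots> < v * n"
      proof -
        have "\<bar>Kb\<bar> * e = v * n * (\<bar>Kb\<bar> / (\<bar>Kb\<bar> + 1))" by (simp add: e_def field_simps)
        also have "\<dots> < v * n * 1"
          using v n by (intro mult_strict_left_mono) auto
        finally show ?thesis by simp
      qed
      finally show False by simp
    qed
  qed
  define BA where "BA A = {b\<in>B. Poly_Mapping.keys (\<psi> b) \<subseteq> A}" for A
  have finBA: "finite (BA A)" if A: "finite A" for A
  proof -
    have "BA A \<subseteq> B" by (auto simp: BA_def)
    then have "independent (BA A)" using independent_mono[OF B(1)] by blast
    have ind: "independent (\<psi> ` BA A)"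
      by (rule linear_independent_injective_image[OF lin_psi \<open>independent (BA A)\<close>])
         (rule inj_on_subset[OF inj_psi], simp)
    have "\<psi> ` BA A \<subseteq> span ((\<lambda>z. Poly_Mapping.single z 1) ` A)"
      by (rule image_subsetI, rule single_span) (simp add: BA_def)
    from independent_span_bound[OF finite_imageI[OF A] ind this]
    have "finite (\<psi> ` BA A)" by blast
    then show ?thesis by (rule finite_imageD[OF _ inj_on_subset[OF inj_psi subset_UNIV]])
  qed
  have "B \<subseteq> (\<Union>A\<in>{A. finite A \<and> A \<subseteq> C}. BA A)"
  proof
    fix b assume b: "b \<in> B"
    show "b \<in> (\<Union>A\<in>{A. finite A \<and> A \<subseteq> C}. BA A)"
      by (rule UN_I[of "Poly_Mapping.keys (\<psi> b)"]) (auto simp: BA_def keysC b)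
  qed
  moreover have "countable (\<Union>A\<in>{A. finite A \<and> A \<subseteq> C}. BA A)"
    by (rule countable_UN[OF countable_Collect_finite_subset[OF cC]]) (auto intro: countable_finite finBA)
  ultimately have "countable B" by (rule countable_subset)
  moreover have "span B = UNIV" using B(2) by auto
  ultimately show ?thesis using B(1) by blast
qed
end
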